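(* Let $G$ be a graph of order $n$, not isomorphic to $K_n$. If $W$ is a $\tau$-set of $G$ such that $G[W]\cong K_{\tau}$ (where $\tau=\tau(G)$), then $\beta_p(G)\ge\tau(G)+1$.
   Context: All graphs are finite, simple, undirected and connected. Two vertices $u,v$ are twins if $N(u)\setminus\{v\}=N(v)\setminus\{u\}$; the twin number $\tau(G)$ is the maximum cardinality of an equivalence class of the twin relation; a $\tau$-set is a set of pairwise twin vertices of cardinality $\tau(G)$. For a partition $\Pi=\{S_1,\dots,S_k\}$ of $V(G)$, $r(u|\Pi)=(d(u,S_1),\dots,d(u,S_k))$ with $d(u,S)=\min_{w\in S}d(u,w)$; $\Pi$ is locating if $r(u|\Pi)\ne r(v|\Pi)$ for all distinct $u,v$; $\beta_p(G)$ is the minimum size of a locating partition. *)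

theory Defs
  imports Main "HOL-Library.Disjoint_Sets"
begin

definition graph :: "'a set \<Rightarrow> ('a \<Rightarrow> 'a \<Rightarrow> bool) \<Rightarrow> bool" where
  "graph V E \<longleftrightarrow> finite V \<and> V \<noteq> {} \<and>
     (\<forall>u v. E u v \<longrightarrow> u \<in> V \<and> v \<in> V) \<and>
     (\<forall>u v. E u v \<longrightarrow> E v u) \<and> (\<forall>u. \<not> E u u)"

definition connected_graph :: "'a set \<Rightarrow> ('a \<Rightarrow> 'a \<Rightarrow> bool) \<Rightarrow> bool" where
  "connected_graph V E \<longleftrightarrow> graph V E \<and> (\<forall>u\<in>V. \<forall>v\<in>V. \<exists>n. (E ^^ n) u v)"

definition gdist :: "('a \<Rightarrow> 'a \<Rightarrow> bool) \<Rightarrow> 'a \<Rightarrow> 'a \<Rightarrow> nat" where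
  "gdist E u v = (LEAST n. (E ^^ n) u v)"

definition set_dist :: "('a \<Rightarrow> 'a \<Rightarrow> bool) \<Rightarrow> 'a \<Rightarrow> 'a set \<Rightarrow> nat" where
  "set_dist E u S = Min ((gdist E u) ` S)"

definition nbhd :: "'a set \<Rightarrow> ('a \<Rightarrow> 'a \<Rightarrow> bool) \<Rightarrow> 'a \<Rightarrow> 'a set" where
  "nbhd V E u = {w \<in> V. E u w}"

definition twins :: "'a set \<Rightarrow> ('a \<Rightarrow> 'a \<Rightarrow> bool) \<Rightarrow> 'a \<Rightarrow> 'a \<Rightarrow> bool" where
  "twins V E u v \<longleftrightarrow> u \<in> V \<and> v \<in> V \<and> nbhd V E u - {v} = nbhd V E v - {u}"

definition twin_number :: "'a set \<Rightarrow> ('a \<Rightarrow> 'a \<Rightarrow> bool) \<Rightarrow> nat" where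
  "twin_number V E = Max ((\<lambda>u. card {v \<in> V. twins V E u v}) ` V)"

definition tau_set :: "'a set \<Rightarrow> ('a \<Rightarrow> 'a \<Rightarrow> bool) \<Rightarrow> 'a set \<Rightarrow> bool" where
  "tau_set V E W \<longleftrightarrow> W \<subseteq> V \<and> (\<forall>u\<in>W. \<forall>v\<in>W. twins V E u v) \<and>
     card W = twin_number V E"

definition locating_partition :: "'a set \<Rightarrow> ('a \<Rightarrow> 'a \<Rightarrow> bool) \<Rightarrow> 'a set set \<Rightarrow> bool" where
  "locating_partition V E P \<longleftrightarrow> partition_on V P \<and>
     (\<forall>u\<in>V. \<forall>v\<in>V. u \<noteq> v \<longrightarrow> (\<exists>S\<in>P. set_dist E u S \<noteq> set_dist E v S))"

definition partition_dimension :: "'a set \<Rightarrow> ('a \<Rightarrow> 'a \<Rightarrow> bool) \<Rightarrow> nat" where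
  "partition_dimension V E = (LEAST k. \<exists>P. locating_partition V E P \<and> card P = k)"

end

theory Submission
  imports Defs
begin

lemma gdist_self: "gdist E u u = 0"
  unfolding gdist_def by (rule Least_eq_0) simp

lemma gdist_le: "(E ^^ n) u v \<Longrightarrow> gdist E u v \<le> n"
  unfolding gdist_def by (rule Least_le)

lemma walk_ex: "connected_graph V E \<Longrightarrow> u \<in> V \<Longrightarrow> v \<in> V \<Longrightarrow> (E ^^ gdist E u v) u v"
  unfolding gdist_def connected_graph_def by (meson LeastI_ex)

lemma gdist_pos: "connected_graph V E \<Longrightarrow> u \<in> V \<Longrightarrow> v \<in> V \<Longrightarrow> u \<noteq> v \<Longrightarrow> gdist E u v \<noteq> 0"
proof
  assume "connected_graph V E" "u \<in> V" "v \<in> V" "u \<noteq> v" "gdist E u v = 0"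
  then show False using walk_ex[of V E u v] by simp
qed

lemma set_dist_zero: "finite T \<Longrightarrow> u \<in> T \<Longrightarrow> set_dist E u T = 0"
  unfolding set_dist_def
  by (metis Min_le finite_imageI gdist_self image_eqI le_zero_eq)

lemma set_dist_one:
  assumes cg: "connected_graph V E" and "u \<in> V" "u \<notin> T" "T \<subseteq> V" "finite T" "t0 \<in> T" "E u t0"
  shows "set_dist E u T = 1"
proof -
  have a: "\<forall>t\<in>T. gdist E u t \<ge> 1"
    using gdist_pos[OF cg] assms by (metis in_mono less_one not_le)
  have b: "gdist E u t0 \<le> 1" using gdist_le[where E=E and n=1 and u=u and v=t0] assms by (simp add: relcompp.relcompI)
  have "Min (gdist E u ` T) \<le> 1" using b assms
    by (meson Min_le finite_imageI image_eqI order_trans)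
  moreover have "Min (gdist E u ` T) \<ge> 1" using a assms by (subst Min_ge_iff) auto
  ultimately show ?thesis unfolding set_dist_def by simp
qed

lemma twin_gdist_le:
  assumes cg: "connected_graph V E" and tw: "twins V E w1 w2"
    and v: "v \<in> V" "v \<noteq> w1" "v \<noteq> w2"
  shows "gdist E w2 v \<le> gdist E w1 v"
proof -
  have w: "w1 \<in> V" "w2 \<in> V" using tw unfolding twins_def by auto
  define n where "n = gdist E w1 v"
  have wk: "(E ^^ n) w1 v" using walk_ex[OF cg w(1) v(1)] n_def by simp
  have "n \<noteq> 0" using gdist_pos[OF cg w(1) v(1)] v n_def by auto
  then obtain m where m: "n = Suc m" by (cases n) auto
  then obtain y where y: "E w1 y" "(E ^^ m) y v" using wk by (metis relpowp_Suc_D2)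
  show ?thesis
  proof (cases "y = w2")
    case True
    then show ?thesis using gdist_le[OF y(2)] m n_def by simp
  next
    case False
    have yV: "y \<in> V" using y cg unfolding connected_graph_def graph_def by blast
    have "y \<in> nbhd V E w1 - {w2}" using y yV False unfolding nbhd_def by auto
    then have "y \<in> nbhd V E w2" using tw unfolding twins_def by auto
    then have "E w2 y" unfolding nbhd_def by auto
    then have "(E ^^ n) w2 v" using y m by (metis relpowp_Suc_I2)
    then show ?thesis using gdist_le n_def by metis
  qed
qed

lemma twins_sym: "twins V E u v \<Longrightarrow> twins V E v u"
  unfolding twins_def by auto

lemma twin_set_dist:
  assumes cg: "connected_graph V E" and tw: "twins V E w1 w2"
    and T: "T \<subseteq> V" "w1 \<notin> T" "w2 \<notin> T"
  shows "set_dist E w1 T = set_dist E w2 T"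
proof -
  have "\<And>t. t \<in> T \<Longrightarrow> gdist E w1 t = gdist E w2 t"
    using twin_gdist_le[OF cg tw] twin_gdist_le[OF cg twins_sym[OF tw]] T
    by (metis in_mono le_antisym)
  then show ?thesis unfolding set_dist_def by (metis image_cong)
qed

lemma cross_edge:
  "(E ^^ n) a b \<Longrightarrow> a \<in> W \<Longrightarrow> b \<notin> W \<Longrightarrow> \<exists>x y. x \<in> W \<and> y \<notin> W \<and> E x y"
proof (induction n arbitrary: b)
  case 0
  then show ?case by auto
next
  case (Suc n)
  then obtain c where c: "(E ^^ n) a c" "E c b" by (metis relpowp_Suc_E)
  then show ?case using Suc by (cases "c \<in> W") auto
qed

theorem proposition15:
  fixes V :: "'a set" and E :: "'a \<Rightarrow> 'a \<Rightarrow> bool" and W :: "'a set"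
  assumes "connected_graph V E"
    and "\<exists>u\<in>V. \<exists>v\<in>V. u \<noteq> v \<and> \<not> E u v"
    and "tau_set V E W"
    and "\<forall>u\<in>W. \<forall>v\<in>W. u \<noteq> v \<longrightarrow> E u v"
  shows "partition_dimension V E \<ge> twin_number V E + 1"
proof -
  note cg = assms(1)
  have g: "graph V E" using cg unfolding connected_graph_def by simp
  have fV: "finite V" and VE: "\<And>u v. E u v \<Longrightarrow> u \<in> V \<and> v \<in> V"
    and Esym: "\<And>u v. E u v \<Longrightarrow> E v u" and Eirr: "\<And>u. \<not> E u u"
    using g unfolding graph_def by auto
  have WV: "W \<subseteq> V" and Wtw: "\<forall>u\<in>W. \<forall>v\<in>W. twins V E u v" and cW: "card W = twin_number V E"
    using assms(3) unfolding tau_set_def by auto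
  have fW: "finite W" using WV fV finite_subset by blast
  have main: "card P \<ge> twin_number V E + 1" if lp: "locating_partition V E P" for P
  proof -
    have po: "partition_on V P" and loc: "\<forall>u\<in>V. \<forall>v\<in>V. u \<noteq> v \<longrightarrow> (\<exists>S\<in>P. set_dist E u S \<noteq> set_dist E v S)"
      using lp unfolding locating_partition_def by auto
    have PV: "\<And>S. S \<in> P \<Longrightarrow> S \<subseteq> V" using po unfolding partition_on_def by auto
    have fP: "finite P" using po fV by (meson finite_elements)
    have fS: "\<And>S. S \<in> P \<Longrightarrow> finite S" using PV fV finite_subset by blast
    have ex1: "\<And>v. v \<in> V \<Longrightarrow> \<exists>!S. S \<in> P \<and> v \<in> S"
    proof -
      fix v assume "v \<in> V"
      then obtain S where "S \<in> P" "v \<in> S" using partition_onD1[OF po] by blast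
      moreover have "\<And>S'. S' \<in> P \<Longrightarrow> v \<in> S' \<Longrightarrow> S' = S"
        using partition_onD2[OF po] calculation unfolding disjoint_def by blast
      ultimately show "\<exists>!S. S \<in> P \<and> v \<in> S" by blast
    qed
    define f where "f v = (THE S. S \<in> P \<and> v \<in> S)" for v
    have fP': "\<And>v. v \<in> V \<Longrightarrow> f v \<in> P \<and> v \<in> f v"
      unfolding f_def using ex1 by (metis (mono_tags, lifting) theI')
    have funiq: "\<And>v S. v \<in> V \<Longrightarrow> S \<in> P \<Longrightarrow> v \<in> S \<Longrightarrow> f v = S"
      using ex1 fP' by blast
    have inj: "inj_on f W"
    proof (rule inj_onI, rule ccontr)
      fix w1 w2 assume w: "w1 \<in> W" "w2 \<in> W" "f w1 = f w2" "w1 \<noteq> w2"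
      have tw: "twins V E w1 w2" using Wtw w by auto
      have "\<forall>T\<in>P. set_dist E w1 T = set_dist E w2 T"
      proof
        fix T assume T: "T \<in> P"
        show "set_dist E w1 T = set_dist E w2 T"
        proof (cases "T = f w1")
          case True
          then show ?thesis using fP' w WV fS T set_dist_zero by (metis subsetD)
        next
          case False
          then have "w1 \<notin> T" "w2 \<notin> T" using funiq w WV T by (metis subsetD)+
          then show ?thesis using twin_set_dist[OF cg tw PV[OF T]] by simp
        qed
      qed
      then show False using loc w WV by blast
    qed
    have imW: "f ` W \<subseteq> P" using fP' WV by auto
    have cle: "card W \<le> card P" using card_inj_on_le[OF inj imW fP] .
    show ?thesis
    proof (rule ccontr)
      assume "\<not> ?thesis"
      then have "card P \<le> card W" using cW by simp
      then have "card (f ` W) = card P" using card_image[OF inj] cle by simp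
      then have fWP: "f ` W = P" using card_subset_eq[OF fP imW] by simp
      obtain a b where ab: "a \<in> V" "b \<in> V" "a \<noteq> b" "\<not> E a b" using assms(2) by blast
      have "\<not> (a \<in> W \<and> b \<in> W)" using ab assms(4) by blast
      then obtain c where c: "c \<in> V" "c \<notin> W" using ab by blast
      have "W \<noteq> {}"
      proof
        assume "W = {}"
        then have "twin_number V E = 0" using cW by simp
        moreover have "card {v \<in> V. twins V E a v} \<le> twin_number V E"
          unfolding twin_number_def using fV ab by (intro Max_ge) auto
        moreover have "card {v \<in> V. twins V E a v} \<ge> 1"
        proof -
          have "a \<in> {v \<in> V. twins V E a v}" using ab unfolding twins_def by auto
          then show ?thesis using fV by (metis (no_types, lifting) One_nat_def Suc_leI card_gt_0_iff empty_iff finite_subset mem_Collect_eq subsetI)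
        qed
        ultimately show False by simp
      qed
      then obtain w0 where w0: "w0 \<in> W" by blast
      obtain w x where wx: "w \<in> W" "x \<notin> W" "E w x"
        using cross_edge[OF walk_ex[OF cg _ c(1)] w0 c(2)] w0 WV by blast
      have xV: "x \<in> V" using VE wx by blast
      have Sx: "f x \<in> P" using fP' xV by blast
      then obtain w' where w': "w' \<in> W" "f w' = f x" using fWP by (metis imageE)
      have "w' \<noteq> x" using w' wx by auto
      moreover have "\<forall>T\<in>P. set_dist E x T = set_dist E w' T"
      proof
        fix T assume T: "T \<in> P"
        show "set_dist E x T = set_dist E w' T"
        proof (cases "T = f x")
          case True
          then show ?thesis using fP' w' xV WV fS T set_dist_zero by (metis subsetD)
        next
          case False
          obtain w'' where w'': "w'' \<in> W" "f w'' = T" using T fWP by (metis imageE)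
          have nin: "x \<notin> T" "w' \<notin> T" using False funiq xV w' WV T by (metis subsetD)+
          have w''T: "w'' \<in> T" using fP' w'' WV by blast
          have Ex: "E x w''"
          proof (cases "w'' = w")
            case True then show ?thesis using wx Esym by simp
          next
            case False
            have tw: "twins V E w w''" using Wtw wx w'' by auto
            have "x \<in> nbhd V E w - {w''}" using wx xV w''T nin unfolding nbhd_def by auto
            then have "x \<in> nbhd V E w''" using tw unfolding twins_def by auto
            then show ?thesis unfolding nbhd_def using Esym by auto
          qed
          have Ew: "E w' w''" using assms(4) w' w'' w''T nin by metis
          show ?thesis
            using set_dist_one[OF cg xV nin(1) PV[OF T] fS[OF T] w''T Ex]
                  set_dist_one[OF cg _ nin(2) PV[OF T] fS[OF T] w''T Ew] w' WV by auto
        qed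
      qed
      moreover have "w' \<in> V" using w' WV by blast
      ultimately show False using loc xV by metis
    qed
  qed
  define P0 where "P0 = (\<lambda>v. {v}) ` V"
  have "locating_partition V E P0"
    unfolding locating_partition_def
  proof
    show "partition_on V P0" unfolding P0_def partition_on_def disjoint_def by auto
    show "\<forall>u\<in>V. \<forall>v\<in>V. u \<noteq> v \<longrightarrow> (\<exists>S\<in>P0. set_dist E u S \<noteq> set_dist E v S)"
    proof (intro ballI impI)
      fix u v assume uv: "u \<in> V" "v \<in> V" "u \<noteq> v"
      have "set_dist E u {u} = 0" by (simp add: set_dist_zero)
      moreover have "set_dist E v {u} \<noteq> 0"
        unfolding set_dist_def using gdist_pos[OF cg uv(2) uv(1)] uv by auto
      moreover have "{u} \<in> P0" unfolding P0_def using uv by auto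
      ultimately show "\<exists>S\<in>P0. set_dist E u S \<noteq> set_dist E v S" by metis
    qed
  qed
  then have ex: "\<exists>k. \<exists>P. locating_partition V E P \<and> card P = k" by blast
  have "\<exists>P. locating_partition V E P \<and> card P = partition_dimension V E"
    unfolding partition_dimension_def by (rule LeastI_ex[OF ex])
  then obtain P where "locating_partition V E P" "card P = partition_dimension V E" by blast
  then show ?thesis using main by metis
qed

end
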